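(* Let $m\ge 7$ and $r$ be integers with $\lceil\frac{m}{2}\rceil<r<m-2$, and let $\mathcal{B}$ be the primitive, narrow-sense BCH code of length $2^m-1$ and designed distance $2^{m-r}-1$. Then \[\mathcal{R}(r,m)^{*\perp}\subseteq\mathcal{R}(r,m)^*\subset\mathcal{B}.\]
   Context: Let $n=2^m-1$. For a nonnegative integer $s$, $C_{s,n}=\{s2^i\bmod n : i\in\mathbb{N}\}$, $S_n$ is the set of smallest elements of the distinct cyclotomic cosets modulo $n$, $\alpha$ is a primitive $n$th root of unity in $\mathbb{F}_{2^m}$, and $M_s(x)=\prod_{i\in C_{s,n}}(x-\alpha^i)$. $\operatorname{w}_2(s)$ is the number of ones in the binary expansion of $s$. Cyclic codes of length $n$ are ideals of $\mathbb{F}_2[x]/(x^n-1)$ given by generator polynomials. The punctured Reed--Muller code $\mathcal{R}(r,m)^*$ ($r<m$) is the cyclic code of length $n$ with generator polynomial $\prod_{s\in S_n,\,1\le\operatorname{w}_2(s)\le m-r-1}M_s(x)$, and $\mathcal{R}(r,m)^{*\perp}$ is its dual. The primitive, narrow-sense BCH code of length $n$ and designed distance $d$ is the cyclic code with generator polynomial $\prod_{i\in\bigcup_{j=0}^{d-2}C_{1+j,n}}(x-\alpha^i)$. *)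

theory Defs
  imports Complex_Main "HOL-Library.Z2" "HOL-Computational_Algebra.Polynomial"
begin

definition cyc_coset :: "nat \<Rightarrow> nat \<Rightarrow> nat set" where
  "cyc_coset n s = {(s * 2 ^ i) mod n | i. True}"

definition coset_leaders :: "nat \<Rightarrow> nat set" where
  "coset_leaders n = {s. s < n \<and> (\<forall>t \<in> cyc_coset n s. s \<le> t)}"

fun w2 :: "nat \<Rightarrow> nat" where
  "w2 s = (if s = 0 then 0 else s mod 2 + w2 (s div 2))"

definition prim_root :: "nat \<Rightarrow> 'a::field \<Rightarrow> bool" where
  "prim_root n \<alpha> \<longleftrightarrow> \<alpha> ^ n = 1 \<and> (\<forall>k. 0 < k \<and> k < n \<longrightarrow> \<alpha> ^ k \<noteq> 1)"

definition min_poly :: "nat \<Rightarrow> 'a::field \<Rightarrow> nat \<Rightarrow> 'a poly" where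
  "min_poly n \<alpha> s = (\<Prod>i \<in> cyc_coset n s. [:- (\<alpha> ^ i), 1:])"

text \<open>Binary cyclic code of length n with generator polynomial g (g in F_2[x], given
  via its roots in an extension field 'a): the ideal (g) of F_2[x]/(x^n-1), with
  elements represented by their unique representatives of degree < n.\<close>
definition cyclic_code :: "nat \<Rightarrow> 'a::field poly \<Rightarrow> bit poly set" where
  "cyclic_code n g = {c. degree c < n \<and> g dvd map_poly of_bit c}"

definition dual_code :: "nat \<Rightarrow> bit poly set \<Rightarrow> bit poly set" where
  "dual_code n C = {c. degree c < n \<and> (\<forall>d \<in> C. (\<Sum>i<n. coeff c i * coeff d i) = 0)}"

definition punct_RM :: "nat \<Rightarrow> nat \<Rightarrow> 'a::field \<Rightarrow> bit poly set" where
  "punct_RM r m \<alpha> = cyclic_code (2^m - 1)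
     (\<Prod>s \<in> {s \<in> coset_leaders (2^m - 1). 1 \<le> w2 s \<and> w2 s \<le> m - r - 1}.
        min_poly (2^m - 1) \<alpha> s)"

definition bch_code :: "nat \<Rightarrow> nat \<Rightarrow> 'a::field \<Rightarrow> bit poly set" where
  "bch_code n d \<alpha> = cyclic_code n
     (\<Prod>i \<in> (\<Union>j \<in> {0..d-2}. cyc_coset n (1 + j)). [:- (\<alpha> ^ i), 1:])"

end

theory Submission imports Defs "HOL-Number_Theory.Cong" begin

lemma char2_of_card:
  assumes "card (UNIV :: 'a::{field,finite} set) = 2 ^ m" "m > 0"
  shows "(2::'a) = 0"
proof -
  have "(\<Sum>y\<in>UNIV. (1::'a) + y) = (\<Sum>y\<in>UNIV. y)"
  proof -
    have "(\<Sum>y\<in>UNIV. (1::'a) + y) = (\<Sum>y\<in>(\<lambda>y. 1 + y) ` UNIV. y)"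
      by (rule sum.reindex[symmetric, simplified]) (auto simp: inj_on_def)
    also have "(\<lambda>y. (1::'a) + y) ` UNIV = UNIV"
      by (auto simp: image_iff)
    finally show ?thesis .
  qed
  hence "of_nat (card (UNIV::'a set)) = (0::'a)"
    by (simp add: sum.distrib)
  hence "(2::'a) ^ m = 0" using assms(1) by simp
  thus ?thesis by simp
qed

lemma of_bit_add: "(2::'a::field) = 0 \<Longrightarrow> (of_bit (a + b) :: 'a) = of_bit a + of_bit b"
proof -
  assume h: "(2::'a::field) = 0"
  have "(1::'a) + 1 = 0" using h by (simp only: one_add_one)
  then show ?thesis by (cases a; cases b) simp_all
qed

lemma of_bit_mult: "(of_bit (a * b) :: 'a::field) = of_bit a * of_bit b"
  by (cases a; cases b) simp_all

lemma of_bit_0: "of_bit (0::bit) = 0" by simp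
lemma of_bit_1: "of_bit (1::bit) = 1" by simp

lemma of_bit_uminus: "(2::'a::field) = 0 \<Longrightarrow> (of_bit (- a) :: 'a) = - of_bit a"
proof -
  assume h: "(2::'a::field) = 0"
  have "(1::'a) + 1 = 0" using h by (simp only: one_add_one)
  then have "(-1::'a) = 1" by (simp add: eq_neg_iff_add_eq_0)
  then show ?thesis by (cases a) simp_all
qed

lemma of_bit_sum: "(2::'a::field) = 0 \<Longrightarrow> (of_bit (sum f A) :: 'a) = (\<Sum>x\<in>A. of_bit (f x))"
proof (induction A rule: infinite_finite_induct)
  case (insert x F)
  then show ?case by (metis sum.insert of_bit_add)
qed simp_all

lemma map_bit_add: "(2::'a::field) = 0 \<Longrightarrow>
  (map_poly of_bit (p + q) :: 'a poly) = map_poly of_bit p + map_poly of_bit q"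
  by (rule poly_eqI) (simp add: coeff_map_poly of_bit_add)

lemma map_bit_minus: "(2::'a::field) = 0 \<Longrightarrow>
  (map_poly of_bit (p - q) :: 'a poly) = map_poly of_bit p - map_poly of_bit q"
  by (rule poly_eqI) (simp add: coeff_map_poly of_bit_add of_bit_uminus)

lemma map_bit_smult:
  "(map_poly of_bit (smult a q) :: 'a::field poly) = smult (of_bit a) (map_poly of_bit q)"
  by (rule poly_eqI) (simp add: coeff_map_poly of_bit_mult)

lemma map_bit_mult: "(2::'a::field) = 0 \<Longrightarrow>
  (map_poly of_bit (p * q) :: 'a poly) = map_poly of_bit p * map_poly of_bit q"
proof (induction p)
  case 0 then show ?case by simp
next
  case (pCons a p)
  have e: "pCons a p * q = smult a q + pCons 0 (p * q)" by simp
  have "map_poly of_bit (pCons a p * q) = (map_poly of_bit (smult a q) + map_poly of_bit (pCons 0 (p * q)) :: 'a poly)"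
    unfolding e by (rule map_bit_add[OF pCons.prems])
  also have "\<dots> = smult (of_bit a) (map_poly of_bit q) + pCons 0 (map_poly of_bit p * map_poly of_bit q)"
    using pCons by (simp add: map_bit_smult map_poly_pCons)
  also have "\<dots> = map_poly of_bit (pCons a p) * map_poly of_bit q"
    by (simp add: map_poly_pCons)
  finally show ?case .
qed

lemma map_bit_monom: "(map_poly of_bit (monom 1 j) :: 'a::field poly) = monom 1 j"
  by (rule poly_eqI) (simp add: coeff_map_poly coeff_monom)

lemma coeff_map_bit: "coeff (map_poly of_bit p :: 'a::field poly) i = of_bit (coeff p i)"
  by (simp add: coeff_map_poly)


definition PP :: "'a::field \<Rightarrow> nat set \<Rightarrow> 'a poly" where
  "PP \<alpha> S = (\<Prod>i\<in>S. [:- (\<alpha> ^ i), 1:])"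

lemma poly_PP: "poly (PP \<alpha> S) x = (\<Prod>i\<in>S. x - \<alpha> ^ i)"
  by (simp add: PP_def poly_prod)

lemma prod_roots_dvd:
  fixes f :: "'a::field poly"
  assumes "finite A" "\<forall>a\<in>A. poly f a = 0"
  shows "(\<Prod>a\<in>A. [:- a, 1:]) dvd f"
  using assms
proof (induction A arbitrary: f rule: finite_induct)
  case empty then show ?case by simp
next
  case (insert a A)
  have "[:- a, 1:] dvd f" using insert.prems by (simp add: poly_eq_0_iff_dvd)
  then obtain q where q: "f = [:- a, 1:] * q" by (auto elim: dvdE)
  have "\<forall>b\<in>A. poly q b = 0"
  proof
    fix b assume "b \<in> A"
    then have "b \<noteq> a" "poly f b = 0" using insert by auto
    then show "poly q b = 0" using q by simp
  qed
  then have "(\<Prod>a\<in>A. [:- a, 1:]) dvd q" using insert.IH by blast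
  then have "[:- a, 1:] * (\<Prod>b\<in>A. [:- b, 1:]) dvd f" unfolding q by (rule mult_dvd_mono[OF dvd_refl])
  moreover have "(\<Prod>b\<in>insert a A. [:- b, 1:]) = [:- a, 1:] * (\<Prod>b\<in>A. [:- b, 1:])"
    using insert.hyps by (rule prod.insert)
  ultimately show ?case by simp
qed

lemma prim_root_facts:
  assumes "prim_root n \<alpha>" "n > 0"
  shows "\<alpha> \<noteq> 0" "\<alpha> ^ n = 1" "\<And>k. \<alpha> ^ k = \<alpha> ^ (k mod n)"
    "inj_on (\<lambda>i. \<alpha> ^ i) {..<n}"
proof -
  show an: "\<alpha> ^ n = 1" using assms by (simp add: prim_root_def)
  show nz: "\<alpha> \<noteq> 0"
  proof
    assume "\<alpha> = 0"
    then have "\<alpha> ^ n = 0" using assms(2) by simp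
    then show False using an by simp
  qed
  show md: "\<And>k. \<alpha> ^ k = \<alpha> ^ (k mod n)"
  proof -
    fix k
    have "k = n * (k div n) + k mod n" by simp
    then have "\<alpha> ^ k = \<alpha> ^ (n * (k div n) + k mod n)" by (rule arg_cong)
    then have "\<alpha> ^ k = (\<alpha> ^ n) ^ (k div n) * \<alpha> ^ (k mod n)" by (simp only: power_add power_mult)
    then show "\<alpha> ^ k = \<alpha> ^ (k mod n)" by (simp add: an)
  qed
  show "inj_on (\<lambda>i. \<alpha> ^ i) {..<n}"
  proof (rule inj_onI)
    fix i l assume il: "i \<in> {..<n}" "l \<in> {..<n}" "\<alpha> ^ i = \<alpha> ^ l"
    have *: False if "i < l" "l < n" "\<alpha> ^ i = \<alpha> ^ l" for i l
    proof -
      have "i + (l - i) = l" using that(1) by simp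
      then have "\<alpha> ^ i * \<alpha> ^ (l - i) = \<alpha> ^ l" by (simp only: power_add[symmetric])
      then have "\<alpha> ^ i * \<alpha> ^ (l - i) = \<alpha> ^ i * 1" using that(3) by simp
      then have "\<alpha> ^ (l - i) = 1" using nz by simp
      moreover have "0 < l - i" "l - i < n" using \<open>i < l\<close> \<open>l < n\<close> by auto
      ultimately show False using assms(1) by (simp add: prim_root_def)
    qed
    show "i = l"
    proof (rule ccontr)
      assume "i \<noteq> l"
      then consider "i < l" | "l < i" by linarith
      then show False
      proof cases
        case 1 then show False using *[of i l] il by auto
      next
        case 2 then show False using *[of l i] il by auto
      qed
    qed
  qed
qed

lemma PP_alt:
  assumes "prim_root n \<alpha>" "n > 0" "S \<subseteq> {..<n}"
  shows "PP \<alpha> S = (\<Prod>a\<in>(\<lambda>i. \<alpha> ^ i) ` S. [:- a, 1:])"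
proof -
  have "inj_on (\<lambda>i. \<alpha> ^ i) S" using prim_root_facts(4)[OF assms(1,2)] assms(3) inj_on_subset by blast
  then show ?thesis by (simp add: PP_def prod.reindex)
qed

lemma PP_dvd_iff:
  assumes "prim_root n \<alpha>" "n > 0" "S \<subseteq> {..<n}"
  shows "PP \<alpha> S dvd f \<longleftrightarrow> (\<forall>i\<in>S. poly f (\<alpha> ^ i) = 0)"
proof
  assume "PP \<alpha> S dvd f"
  then obtain q where "f = PP \<alpha> S * q" by (auto elim: dvdE)
  moreover have "finite S" using assms(3) finite_subset by blast
  ultimately show "\<forall>i\<in>S. poly f (\<alpha> ^ i) = 0" by (auto simp: poly_PP prod_zero_iff)
next
  assume "\<forall>i\<in>S. poly f (\<alpha> ^ i) = 0"
  moreover have "finite S" using assms(3) finite_subset by blast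
  ultimately show "PP \<alpha> S dvd f" unfolding PP_alt[OF assms]
    by (intro prod_roots_dvd) auto
qed

lemma poly_PP_nonzero:
  assumes "prim_root n \<alpha>" "n > 0" "S \<subseteq> {..<n}" "t < n" "t \<notin> S"
  shows "poly (PP \<alpha> S) (\<alpha> ^ t) \<noteq> 0"
proof -
  have "finite S" using assms(3) finite_subset by blast
  moreover have "\<forall>i\<in>S. \<alpha> ^ t \<noteq> \<alpha> ^ i"
    using prim_root_facts(4)[OF assms(1,2)] assms(3-5) by (auto simp: inj_on_def)
  ultimately show ?thesis by (simp add: poly_PP prod_zero_iff)
qed

lemma degree_PP: "finite S \<Longrightarrow> degree (PP \<alpha> S) = card S"
  unfolding PP_def by (subst degree_prod_eq_sum_degree) auto

lemma char2_neg: "(2::'a::field) = 0 \<Longrightarrow> - (x::'a) = x"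
proof -
  assume "(2::'a::field) = 0"
  then have "x + x = 0" by (metis mult_2 mult_zero_left)
  then show ?thesis by (simp add: eq_neg_iff_add_eq_0[symmetric] minus_equation_iff)
qed

lemma map_sq_add: "(2::'a::field) = 0 \<Longrightarrow>
  map_poly (\<lambda>a::'a. a ^ 2) (p + q) = map_poly (\<lambda>a. a ^ 2) p + map_poly (\<lambda>a. a ^ 2) q"
proof (rule poly_eqI)
  fix i assume h: "(2::'a::field) = 0"
  have "(coeff p i + coeff q i) ^ 2 = coeff p i ^ 2 + coeff q i ^ 2"
    by (simp add: power2_sum h)
  then show "coeff (map_poly (\<lambda>a::'a. a ^ 2) (p + q)) i = coeff (map_poly (\<lambda>a. a ^ 2) p + map_poly (\<lambda>a. a ^ 2) q) i"
    by (simp add: coeff_map_poly)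
qed

lemma map_sq_mult: "(2::'a::field) = 0 \<Longrightarrow>
  map_poly (\<lambda>a::'a. a ^ 2) (p * q) = map_poly (\<lambda>a. a ^ 2) p * map_poly (\<lambda>a. a ^ 2) q"
proof (induction p)
  case 0 then show ?case by simp
next
  case (pCons a p)
  have sm: "map_poly (\<lambda>a::'a. a ^ 2) (smult a q) = smult (a^2) (map_poly (\<lambda>a. a ^ 2) q)"
    by (rule poly_eqI) (simp add: coeff_map_poly power_mult_distrib)
  have "map_poly (\<lambda>a::'a. a ^ 2) (pCons a p * q) = map_poly (\<lambda>a. a ^ 2) (smult a q) + map_poly (\<lambda>a. a ^ 2) (pCons 0 (p * q))"
    using pCons by (simp add: map_sq_add)
  also have "\<dots> = smult (a^2) (map_poly (\<lambda>a. a ^ 2) q) + pCons 0 (map_poly (\<lambda>a. a ^ 2) p * map_poly (\<lambda>a. a ^ 2) q)"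
    using pCons by (simp add: sm map_poly_pCons)
  also have "\<dots> = map_poly (\<lambda>a. a ^ 2) (pCons a p) * map_poly (\<lambda>a. a ^ 2) q"
    by (simp add: map_poly_pCons)
  finally show ?case .
qed

lemma map_sq_prod: "(2::'a::field) = 0 \<Longrightarrow>
  map_poly (\<lambda>a::'a. a ^ 2) (\<Prod>i\<in>S. f i) = (\<Prod>i\<in>S. map_poly (\<lambda>a. a ^ 2) (f i))"
proof (induction S rule: infinite_finite_induct)
  case (insert x F) then show ?case by (simp add: map_sq_mult)
qed (simp_all add: map_poly_pCons)

lemma double_inj:
  assumes "odd n"
  shows "inj_on (\<lambda>i::nat. (2 * i) mod n) {..<n}"
proof (rule inj_onI)
  fix i l assume "i \<in> {..<n}" "l \<in> {..<n}" "(2 * i) mod n = (2 * l) mod n"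
  then have "[2 * i = 2 * l] (mod n)" "i < n" "l < n" by (auto simp: cong_def)
  moreover have "coprime 2 n" using assms by simp
  ultimately have "[i = l] (mod n)" using cong_mult_lcancel_nat by blast
  then show "i = l" using \<open>i < n\<close> \<open>l < n\<close> by (simp add: cong_def)
qed

lemma PP_binary:
  assumes "prim_root n \<alpha>" "n > 0" "odd n" "S \<subseteq> {..<n}"
    and cl: "\<And>i. i \<in> S \<Longrightarrow> (2 * i) mod n \<in> S" and two: "(2::'a::field) = 0"
  shows "\<exists>g::bit poly. map_poly of_bit g = (PP \<alpha> S :: 'a poly)"
proof -
  have fin: "finite S" using assms(4) finite_subset by blast
  have img: "(\<lambda>i. (2 * i) mod n) ` S = S"
    by (rule endo_inj_surj[OF fin]) (use cl double_inj[OF assms(3)] assms(4) inj_on_subset in auto)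
  have inj: "inj_on (\<lambda>i. (2 * i) mod n) S" using double_inj[OF assms(3)] assms(4) inj_on_subset by blast
  have "map_poly (\<lambda>a. a ^ 2) (PP \<alpha> S) = (\<Prod>i\<in>S. [:- (\<alpha> ^ ((2 * i) mod n)), 1:])"
    unfolding PP_def using two
    by (simp add: map_sq_prod map_poly_pCons prim_root_facts(3)[OF assms(1,2), symmetric]
       power_mult[symmetric] mult.commute char2_neg[OF two])
  also have "\<dots> = PP \<alpha> S"
    unfolding PP_def
    using prod.reindex[OF inj, of "\<lambda>j. [:- (\<alpha> ^ j), 1:]"] img by simp
  finally have fix2: "map_poly (\<lambda>a. a ^ 2) (PP \<alpha> S) = PP \<alpha> S" .
  have c01: "coeff (PP \<alpha> S) k = 0 \<or> coeff (PP \<alpha> S) k = 1" for k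
  proof -
    have "coeff (PP \<alpha> S) k ^ 2 = coeff (PP \<alpha> S) k"
      using arg_cong[OF fix2, of "\<lambda>p. coeff p k"] by (simp add: coeff_map_poly)
    then have "coeff (PP \<alpha> S) k * (coeff (PP \<alpha> S) k - 1) = 0"
      by (simp add: power2_eq_square algebra_simps)
    then show ?thesis by auto
  qed
  define g :: "bit poly" where "g = map_poly (\<lambda>a. if a = 0 then 0 else 1) (PP \<alpha> S)"
  have "map_poly of_bit g = PP \<alpha> S"
  proof (rule poly_eqI)
    fix k show "coeff (map_poly of_bit g) k = coeff (PP \<alpha> S) k"
      using c01[of k] by (auto simp: g_def coeff_map_poly)
  qed
  then show ?thesis by blast
qed


declare w2.simps[simp del]

lemma w2_0[simp]: "w2 0 = 0" by (subst w2.simps) simp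

lemma w2_rec: "w2 s = s mod 2 + w2 (s div 2)"
  by (cases "s = 0") (simp_all add: w2.simps[of s])

lemma w2_1: "w2 (Suc 0) = Suc 0"
  by (subst w2.simps) simp

lemma aux_par: "s < 2 * (P::nat) \<Longrightarrow> (2 * P - Suc s) mod 2 = 1 - s mod 2"
proof -
  assume a: "s < 2 * P"
  have q: "s = 2 * (s div 2) + s mod 2" by simp
  have r: "s mod 2 < 2" by simp
  have "s div 2 < P" using a q r by linarith
  then have "2 * P - Suc s = 2 * (P - s div 2 - 1) + (1 - s mod 2)" using q r by linarith
  moreover have "\<And>X Y. Y < 2 \<Longrightarrow> (2 * (X::nat) + Y) mod 2 = Y" by simp
  moreover have "1 - s mod 2 < 2" by simp
  ultimately show ?thesis by metis
qed

lemma w2_double: "w2 (2 * s) = w2 s"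
  using w2_rec[of "2*s"] by simp

lemma w2_double1: "w2 (2 * s + 1) = w2 s + 1"
  using w2_rec[of "2*s+1"] by simp

lemma w2_add_pow: "a < 2 ^ k \<Longrightarrow> w2 (a + 2 ^ k) = w2 a + 1"
proof (induction k arbitrary: a)
  case 0 then show ?case by (simp add: w2_1)
next
  case (Suc k)
  have "a div 2 < 2 ^ k" using Suc.prems by auto
  then have IH: "w2 (a div 2 + 2 ^ k) = w2 (a div 2) + 1" using Suc.IH by blast
  have "w2 (a + 2 ^ Suc k) = (a + 2 ^ Suc k) mod 2 + w2 ((a + 2 ^ Suc k) div 2)" by (rule w2_rec)
  also have "(a + 2 ^ Suc k) div 2 = a div 2 + 2 ^ k" by simp
  also have "(a + 2 ^ Suc k) mod 2 = a mod 2" by simp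
  finally show ?case using IH w2_rec[of a] by simp
qed

lemma w2_pos: "s > 0 \<Longrightarrow> w2 s \<ge> 1"
proof (induction s rule: less_induct)
  case (less s)
  show ?case
  proof (cases "s mod 2 = 0")
    case True
    then have "s div 2 > 0" "s div 2 < s" using less.prems by auto
    then show ?thesis using less.IH[of "s div 2"] w2_rec[of s] by simp
  next
    case False then show ?thesis using w2_rec[of s] by simp
  qed
qed

lemma w2_le: "s < 2 ^ k \<Longrightarrow> w2 s \<le> k"
proof (induction k arbitrary: s)
  case 0 then show ?case by simp
next
  case (Suc k)
  then have "s div 2 < 2 ^ k" by auto
  then show ?case using Suc.IH[of "s div 2"] w2_rec[of s] by simp
qed

lemma w2_lt: "s + 1 < 2 ^ k \<Longrightarrow> w2 s < k"
proof (induction k arbitrary: s)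
  case 0 then show ?case by simp
next
  case (Suc k)
  show ?case
  proof (cases "s div 2 + 1 < 2 ^ k")
    case True
    then have "w2 (s div 2) < k" using Suc.IH by blast
    then show ?thesis using w2_rec[of s] by simp
  next
    case False
    then have "s div 2 + 1 = 2 ^ k" using Suc.prems by auto
    moreover have "s = 2 * (s div 2) + s mod 2" by simp
    moreover have "s mod 2 < 2" by simp
    moreover have "s + 1 < 2 * 2 ^ k" using Suc.prems by simp
    ultimately have "s mod 2 = 0" by linarith
    moreover have "s div 2 < 2 ^ k" using Suc.prems by auto
    ultimately show ?thesis using w2_le[of "s div 2" k] w2_rec[of s] by simp
  qed
qed

lemma w2_compl: "s < 2 ^ k \<Longrightarrow> w2 (2 ^ k - 1 - s) = k - w2 s"
proof (induction k arbitrary: s)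
  case 0 then show ?case by simp
next
  case (Suc k)
  have sd: "s div 2 < 2 ^ k" using Suc.prems by auto
  have e1: "(2 ^ Suc k - 1 - s) div 2 = 2 ^ k - 1 - s div 2" using Suc.prems by auto
  have e2: "(2 ^ Suc k - 1 - s) mod 2 = 1 - s mod 2" using aux_par[of s "2^k"] Suc.prems by simp
  have "w2 (2 ^ Suc k - 1 - s) = 1 - s mod 2 + (k - w2 (s div 2))"
    using w2_rec[of "2 ^ Suc k - 1 - s"] e1 e2 Suc.IH[OF sd] by simp
  moreover have "w2 (s div 2) \<le> k" using w2_le[OF sd] .
  ultimately show ?case using w2_rec[of s] by auto
qed

lemma w2_rot:
  assumes "m \<ge> 1" "s < 2 ^ m - 1"
  shows "w2 ((2 * s) mod (2 ^ m - 1)) = w2 s"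
proof (cases "s < 2 ^ (m - 1)")
  case True
  have "2 ^ m = 2 * (2::nat) ^ (m - 1)" using assms(1) by (cases m) simp_all
  then have "2 * s < 2 ^ m - 1" using True by linarith
  then show ?thesis by (simp add: w2_double)
next
  case False
  have pm: "2 ^ m = 2 * (2::nat) ^ (m - 1)" using assms(1) by (cases m) simp_all
  define a where "a = s - 2 ^ (m - 1)"
  have s: "s = a + 2 ^ (m - 1)" using False a_def by simp
  have alt: "a < 2 ^ (m - 1)" using assms(2) s pm by linarith
  have "(1::nat) \<le> 2 ^ m" by simp
  then have "2 * s = (2 ^ m - 1) + (2 * a + 1)" using s pm by linarith
  moreover have "2 * a + 1 < 2 ^ m - 1" using assms(2) s pm by linarith
  ultimately have "(2 * s) mod (2 ^ m - 1) = 2 * a + 1" by (simp only: mod_add_self1 mod_less)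
  then show ?thesis using w2_double1[of a] w2_add_pow[OF alt] s by simp
qed

lemma coset_mem: "t \<in> cyc_coset n s \<longleftrightarrow> (\<exists>i. t = (s * 2 ^ i) mod n)"
  by (auto simp: cyc_coset_def)

lemma coset_step: "(2 * ((s * 2 ^ i) mod n)) mod n = (s * 2 ^ Suc i) mod (n::nat)"
proof -
  have "(2 * ((s * 2 ^ i) mod n)) mod n = (2 * (s * 2 ^ i)) mod n" by (rule mod_mult_right_eq)
  also have "2 * (s * 2 ^ i) = s * 2 ^ Suc i" by simp
  finally show ?thesis .
qed

lemma w2_coset_elem:
  assumes "m \<ge> 1" "s < 2 ^ m - 1"
  shows "w2 ((s * 2 ^ i) mod (2 ^ m - 1)) = w2 s"
proof (induction i)
  case 0 then show ?case using assms by simp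
next
  case (Suc i)
  have "(s * 2 ^ i) mod (2 ^ m - 1) < 2 ^ m - 1" using assms(2) by simp
  then show ?case using w2_rot[OF assms(1)] Suc coset_step[of s i "2 ^ m - 1"] by metis
qed

lemma coset_sub: "cyc_coset n s \<subseteq> {..<n}" if "n > 0"
  using that by (auto simp: cyc_coset_def)

lemma coset_finite: "n > 0 \<Longrightarrow> finite (cyc_coset n s)"
  by (rule finite_subset[OF coset_sub]) auto

lemma coset_self: "s < n \<Longrightarrow> s \<in> cyc_coset n s"
  by (auto simp: cyc_coset_def intro!: exI[of _ 0])

lemma coset_closed: "t \<in> cyc_coset n s \<Longrightarrow> (2 * t) mod n \<in> cyc_coset n s"
  by (auto simp: coset_mem coset_step simp del: power_Suc)

lemma coset_trans: "t \<in> cyc_coset n s \<Longrightarrow> cyc_coset n t \<subseteq> cyc_coset n s"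
proof
  fix x assume "t \<in> cyc_coset n s" "x \<in> cyc_coset n t"
  then obtain i j where "t = (s * 2 ^ i) mod n" "x = (t * 2 ^ j) mod n" by (auto simp: coset_mem)
  then have "x = (s * 2 ^ (i + j)) mod n" by (simp add: mod_mult_left_eq power_add mult.assoc)
  then show "x \<in> cyc_coset n s" by (auto simp: coset_mem)
qed

lemma pow2_mod:
  assumes "m \<ge> 2"
  shows "(2 ^ (m * q)) mod (2 ^ m - 1) = (1::nat)"
proof -
  have "(2::nat) ^ 2 \<le> 2 ^ m" using assms by (rule power_increasing) simp
  then have "(2::nat) ^ m \<ge> 4" by simp
  then have h: "(2::nat) ^ m mod (2 ^ m - 1) = 1"
  proof -
    assume a4: "(2::nat) ^ m \<ge> 4"
    have "(2::nat) ^ m = (2 ^ m - 1) + 1" using a4 by simp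
    then have "(2::nat) ^ m mod (2 ^ m - 1) = ((2 ^ m - 1) + 1) mod (2 ^ m - 1)" by (rule arg_cong)
    then have "(2::nat) ^ m mod (2 ^ m - 1) = 1 mod (2 ^ m - 1)" by (simp only: mod_add_self1)
    then show ?thesis using a4 by simp
  qed
  have "(2 ^ (m * q)) mod (2 ^ m - 1) = ((2 ^ m) ^ q) mod (2 ^ m - 1::nat)" by (simp add: power_mult)
  also have "\<dots> = ((2 ^ m mod (2 ^ m - 1)) ^ q) mod (2 ^ m - 1)" by (simp add: power_mod)
  also have "\<dots> = 1" using h \<open>2 ^ m \<ge> 4\<close> by simp
  finally show ?thesis .
qed

lemma coset_reduce:
  assumes "m \<ge> 2"
  shows "(s * 2 ^ i) mod (2 ^ m - 1) = (s * 2 ^ (i mod m)) mod (2 ^ m - 1::nat)"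
proof -
  have "(s * 2 ^ i) mod (2 ^ m - 1) = (s * 2 ^ (i mod m) * 2 ^ (m * (i div m))) mod (2 ^ m - 1::nat)"
  proof -
    have "i = m * (i div m) + i mod m" by simp
    then have "(2::nat) ^ i = 2 ^ (m * (i div m) + i mod m)" by (rule arg_cong)
    then have "(2::nat) ^ i = 2 ^ (m * (i div m)) * 2 ^ (i mod m)" by (simp only: power_add)
    then show ?thesis by (simp add: mult_ac)
  qed
  also have "\<dots> = (s * 2 ^ (i mod m) * (2 ^ (m * (i div m)) mod (2 ^ m - 1))) mod (2 ^ m - 1)"
    by (simp add: mod_mult_right_eq)
  also have "\<dots> = (s * 2 ^ (i mod m)) mod (2 ^ m - 1)" using pow2_mod[OF assms] by simp
  finally show ?thesis .
qed

lemma coset_sym: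
  assumes "m \<ge> 2" "s < 2 ^ m - 1" "t \<in> cyc_coset (2 ^ m - 1) s"
  shows "s \<in> cyc_coset (2 ^ m - 1) t"
proof -
  obtain i where t: "t = (s * 2 ^ i) mod (2 ^ m - 1)" using assms(3) by (auto simp: coset_mem)
  have "(t * 2 ^ ((m - 1) * i)) mod (2 ^ m - 1) = (s * 2 ^ (m * i)) mod (2 ^ m - 1)"
  proof -
    have "i + (m - 1) * i = m * i" using assms(1) by (cases m) simp_all
    then show ?thesis using t by (simp add: mod_mult_left_eq power_add[symmetric] mult.assoc)
  qed
  also have "\<dots> = (s * (2 ^ (m * i) mod (2 ^ m - 1))) mod (2 ^ m - 1)" by (simp add: mod_mult_right_eq)
  also have "\<dots> = s" using pow2_mod[OF assms(1)] assms(2) by simp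
  finally show ?thesis by (auto simp: coset_mem)
qed

lemma coset_eq:
  assumes "m \<ge> 2" "s < 2 ^ m - 1" "t \<in> cyc_coset (2 ^ m - 1) s"
  shows "cyc_coset (2 ^ m - 1) t = cyc_coset (2 ^ m - 1) s"
  using coset_trans[OF assms(3)] coset_trans[OF coset_sym[OF assms]] by blast


lemma ZR_eq:
  assumes "m \<ge> 2"
  shows "(\<Union>s\<in>{s \<in> coset_leaders (2^m-1). 1 \<le> w2 s \<and> w2 s \<le> K}. cyc_coset (2^m-1) s)
       = {t. t < 2^m-1 \<and> 1 \<le> w2 t \<and> w2 t \<le> K}" (is "?A = ?W")
proof
  show "?A \<subseteq> ?W"
  proof
    fix t assume "t \<in> ?A"
    then obtain s where s: "s \<in> coset_leaders (2^m-1)" "1 \<le> w2 s" "w2 s \<le> K" "t \<in> cyc_coset (2^m-1) s" by blast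
    have "s < 2^m-1" using s(1) by (simp add: coset_leaders_def)
    then obtain i where "t = (s * 2^i) mod (2^m-1)" using s(4) by (auto simp: coset_mem)
    moreover have "w2 ((s * 2 ^ i) mod (2 ^ m - 1)) = w2 s" using w2_coset_elem[of m s i] \<open>s < 2^m-1\<close> assms by simp
    moreover have "(s * 2^i) mod (2^m-1) < 2^m-1" using \<open>s < 2^m-1\<close> by simp
    ultimately show "t \<in> ?W" using s by simp
  qed
next
  show "?W \<subseteq> ?A"
  proof
    fix t assume t: "t \<in> ?W"
    have tn: "t < 2^m-1" using t by simp
    have fin: "finite (cyc_coset (2^m-1) t)" using coset_finite tn by simp
    have ne: "t \<in> cyc_coset (2^m-1) t" using coset_self tn by blast
    define s where "s = Min (cyc_coset (2^m-1) t)"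
    have sin: "s \<in> cyc_coset (2^m-1) t" using Min_in[OF fin] ne s_def by blast
    have ceq: "cyc_coset (2^m-1) s = cyc_coset (2^m-1) t" using coset_eq[OF assms tn sin] .
    have "2^m - 1 > (0::nat)" using tn by simp
    then have sn: "s < 2^m-1" using sin coset_sub[of "2^m-1" t] by auto
    have lead: "s \<in> coset_leaders (2^m-1)"
      using sn ceq fin s_def by (simp add: coset_leaders_def)
    obtain i where "s = (t * 2^i) mod (2^m-1)" using sin by (auto simp: coset_mem)
    then have "w2 s = w2 t" using w2_coset_elem[of m t i] tn assms by simp
    moreover have "t \<in> cyc_coset (2^m-1) s" using ceq ne by simp
    ultimately show "t \<in> ?A" using lead t by auto
  qed
qed

lemma leaders_disjoint:
  assumes "m \<ge> 2" "s1 \<in> coset_leaders (2^m-1)" "s2 \<in> coset_leaders (2^m-1)" "s1 \<noteq> s2"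
  shows "cyc_coset (2^m-1) s1 \<inter> cyc_coset (2^m-1) s2 = {}"
proof (rule ccontr)
  assume "cyc_coset (2^m-1) s1 \<inter> cyc_coset (2^m-1) s2 \<noteq> {}"
  then obtain x where x: "x \<in> cyc_coset (2^m-1) s1" "x \<in> cyc_coset (2^m-1) s2" by blast
  have l1: "s1 < 2^m-1" "\<forall>t\<in>cyc_coset (2^m-1) s1. s1 \<le> t" using assms(2) by (auto simp: coset_leaders_def)
  have l2: "s2 < 2^m-1" "\<forall>t\<in>cyc_coset (2^m-1) s2. s2 \<le> t" using assms(3) by (auto simp: coset_leaders_def)
  have "cyc_coset (2^m-1) s1 = cyc_coset (2^m-1) s2"
    using coset_eq[OF assms(1) l1(1) x(1)] coset_eq[OF assms(1) l2(1) x(2)] by simp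
  then have "s1 \<le> s2" "s2 \<le> s1" using l1 l2 coset_self[OF l1(1)] coset_self[OF l2(1)] by auto
  then show False using assms(4) by simp
qed

lemma RM_gen_eq:
  assumes "m \<ge> 2"
  shows "(\<Prod>s \<in> {s \<in> coset_leaders (2^m - 1). 1 \<le> w2 s \<and> w2 s \<le> K}. min_poly (2^m - 1) \<alpha> s)
     = PP \<alpha> {t. t < 2^m-1 \<and> 1 \<le> w2 t \<and> w2 t \<le> K}"
proof -
  let ?L = "{s \<in> coset_leaders (2^m - 1). 1 \<le> w2 s \<and> w2 s \<le> K}"
  have "(2::nat) ^ 2 \<le> 2 ^ m" using assms by (rule power_increasing) simp
  then have n0: "2^m - 1 > (0::nat)" by simp
  have finL: "finite ?L" by (rule finite_subset[of _ "{..<2^m-1}"]) (auto simp: coset_leaders_def)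
  have "PP \<alpha> (\<Union>s\<in>?L. cyc_coset (2^m-1) s) = (\<Prod>s\<in>?L. PP \<alpha> (cyc_coset (2^m-1) s))"
    unfolding PP_def
    by (rule prod.UNION_disjoint[OF finL])
       (use n0 coset_finite leaders_disjoint[OF assms] in \<open>auto\<close>)
  then show ?thesis using ZR_eq[OF assms, of K] by (simp add: min_poly_def PP_def)
qed

lemma ZB_sub:
  assumes "m \<ge> 2" "k \<le> m" "k \<ge> 2"
  shows "(\<Union>j \<in> {0..(2^k - 1) - 2}. cyc_coset (2^m-1) (1 + j)) \<subseteq> {t. t < 2^m-1 \<and> 1 \<le> w2 t \<and> w2 t \<le> k - 1}"
proof
  fix t assume "t \<in> (\<Union>j \<in> {0..(2^k - 1) - 2}. cyc_coset (2^m-1) (1 + j))"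
  then obtain j i where j: "j \<le> 2^k - 1 - 2" "t = ((1 + j) * 2^i) mod (2^m-1)" by (auto simp: coset_mem)
  have "(2::nat)^2 \<le> 2^k" using assms(3) by (rule power_increasing) simp
  then have pk: "(2::nat)^k \<ge> 4" by simp
  have pkm: "(2::nat)^k \<le> 2^m" using assms(2) by (simp add: power_increasing)
  have gen: "\<And>P Q j. j \<le> P - 1 - 2 \<Longrightarrow> 4 \<le> P \<Longrightarrow> P \<le> Q \<Longrightarrow> 1 + j < Q - (1::nat) \<and> 1 + j + 1 < P"
    by linarith
  have u: "1 + j < 2^m - 1" and u2: "1 + j + 1 < 2^k" using gen[OF j(1) pk pkm] by auto
  have w: "w2 t = w2 (1 + j)" using j(2) w2_coset_elem[of m "1+j" i] u assms(1) by simp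
  have "w2 (1 + j) < k" by (rule w2_lt[OF u2])
  moreover have "w2 (1 + j) \<ge> 1" by (rule w2_pos) simp
  moreover have "t < 2^m - 1" using j(2) u by simp
  ultimately show "t \<in> {t. t < 2^m-1 \<and> 1 \<le> w2 t \<and> w2 t \<le> k - 1}" using w by simp
qed


lemma rot_big:
  assumes "k \<ge> 3" "2 * k < m" "j < m"
  shows "((1 + 2^k) * 2^j) mod (2^m - 1::nat) \<ge> 2^k"
proof (cases "k + j < m")
  case True
  have A: "(2::nat)^(k+j) \<ge> 8 * 2^j"
  proof -
    have "(2::nat)^(k+j) = 2^k * 2^j" by (simp add: power_add)
    moreover have "(2::nat)^3 \<le> 2^k" using assms(1) by (intro power_increasing) auto
    ultimately show ?thesis by simp
  qed
  have "(2::nat)^(Suc (k+j)) \<le> 2^m" using True by (intro power_increasing) auto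
  then have B: "2 * (2::nat)^(k+j) \<le> 2^m" by simp
  have C: "(2::nat)^(k+j) \<ge> 2^k" by (simp add: power_increasing)
  have "(1 + 2^k) * 2^j = (2::nat)^j + 2^(k+j)" by (simp add: power_add algebra_simps)
  moreover have "(2::nat)^j + 2^(k+j) < 2^m - 1"
  proof -
    have "(2::nat)^j \<ge> 1" by simp
    moreover have "\<And>A B Q. 8 * B \<le> A \<Longrightarrow> 2 * A \<le> Q \<Longrightarrow> 1 \<le> B \<Longrightarrow> B + A < Q - (1::nat)" by linarith
    ultimately show ?thesis using A B by blast
  qed
  ultimately have "((1 + 2^k) * 2^j) mod (2^m - 1::nat) = 2^j + 2^(k+j)" by (simp only: mod_less)
  then show ?thesis using C by linarith
next
  case False
  define e where "e = k + j - m"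
  have je: "k + j = m + e" using False e_def by simp
  have ej: "e < j" using je assms(2) by linarith
  have jm: "j \<ge> m - k" using je by linarith
  have V1: "(2::nat)^j \<ge> 2^(m-k)" using jm by (intro power_increasing) auto
  have V2: "(2::nat)^(m-k) \<ge> 2 * 2^k"
  proof -
    have "Suc k \<le> m - k" using assms(2) by linarith
    then have "(2::nat)^(Suc k) \<le> 2^(m-k)" by (intro power_increasing) auto
    then show ?thesis by simp
  qed
  have "(2::nat)^(Suc j) \<le> 2^m" using assms(3) by (intro power_increasing) auto
  then have V3: "2 * (2::nat)^j \<le> 2^m" by simp
  have "(2::nat)^(Suc e) \<le> 2^j" using ej by (intro power_increasing) auto
  then have V4: "2 * (2::nat)^e \<le> 2^j" by simp
  have "j \<ge> 2" using jm assms by linarith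
  then have "(2::nat)^2 \<le> 2^j" by (intro power_increasing) auto
  then have V5: "(2::nat)^j \<ge> 4" by simp
  have eq: "(1 + 2^k) * 2^j = ((2::nat)^j + 2^e) + (2^m - 1) * 2^e"
  proof -
    have "(1 + 2^k) * 2^j = (2::nat)^j + 2^(k+j)" by (simp add: power_add algebra_simps)
    also have "(2::nat)^(k+j) = 2^m * 2^e" using je by (simp add: power_add)
    also have "(2::nat)^m * 2^e = (2^m - 1) * 2^e + 2^e" by (simp add: algebra_simps)
    finally show ?thesis by simp
  qed
  have "\<And>J E Q. 2 * J \<le> Q \<Longrightarrow> 2 * E \<le> J \<Longrightarrow> 4 \<le> J \<Longrightarrow> J + E < Q - (1::nat)" by linarith
  then have lt: "(2::nat)^j + 2^e < 2^m - 1" using V3 V4 V5 by blast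
  have "((1 + 2^k) * 2^j) mod (2^m - 1::nat) = (2::nat)^j + 2^e"
    unfolding eq using lt by simp
  then show ?thesis using V1 V2 by linarith
qed

lemma witness_notin:
  assumes "k \<ge> 3" "2 * k < m"
  shows "1 + 2^k \<notin> (\<Union>j \<in> {0..(2^k - 1) - 2}. cyc_coset (2^m-1) (1 + j))"
proof
  assume "1 + 2^k \<in> (\<Union>j \<in> {0..(2^k - 1) - 2}. cyc_coset (2^m-1) (1 + j))"
  then obtain j where j: "j \<le> 2^k - 1 - 2" "1 + 2^k \<in> cyc_coset (2^m-1) (1 + j)" by auto
  have m2: "m \<ge> 2" using assms by linarith
  have "(2::nat)^k < 2^m" using assms by (simp add: power_strict_increasing)
  moreover have "(2::nat)^2 \<le> 2^k" using assms(1) by (intro power_increasing) auto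
  moreover have "\<And>P Q j. j \<le> P - 1 - 2 \<Longrightarrow> 4 \<le> P \<Longrightarrow> P < Q \<Longrightarrow> 1 + j < Q - (1::nat)" by linarith
  ultimately have u: "1 + j < 2^m - 1" using j(1) by simp
  have "1 + j \<in> cyc_coset (2^m-1) (1 + 2^k)" using coset_sym[OF m2 u j(2)] .
  then obtain i where "1 + j = ((1 + 2^k) * 2^i) mod (2^m-1)" by (auto simp: coset_mem)
  also have "\<dots> = ((1 + 2^k) * 2^(i mod m)) mod (2^m-1)" using coset_reduce[OF m2] .
  finally have "1 + j \<ge> 2^k" using rot_big[OF assms, of "i mod m"] m2 by simp
  moreover have "(2::nat)^2 \<le> 2^k" using assms(1) by (intro power_increasing) auto
  moreover have "\<And>P j. j \<le> P - 1 - 2 \<Longrightarrow> 4 \<le> P \<Longrightarrow> P \<le> 1 + (j::nat) \<Longrightarrow> False" by linarith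
  ultimately show False using j(1) by simp
qed

lemma witness_in:
  assumes "k \<ge> 3" "2 * k < m"
  shows "1 + 2^k < (2^m - 1::nat)" "w2 (1 + 2^k) = 2"
proof -
  have "(2::nat)^(Suc k) \<le> 2^m" using assms by (intro power_increasing) auto
  moreover have "(2::nat)^k \<ge> 8"
  proof -
    have "(2::nat)^3 \<le> 2^k" using assms(1) by (intro power_increasing) auto
    then show ?thesis by simp
  qed
  ultimately show "1 + 2^k < (2^m - 1::nat)" by simp
  have "(2::nat)^0 < 2^k" using assms(1) by (intro power_strict_increasing) auto
  then have "(1::nat) < 2^k" by simp
  then show "w2 (1 + 2^k) = 2" using w2_add_pow[of 1 k] by (simp add: w2_1)
qed


lemma poly_sum_n:
  fixes p :: "'a::field poly"
  assumes "degree p < n"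
  shows "poly p x = (\<Sum>i<n. coeff p i * x ^ i)"
proof -
  have "poly p x = (\<Sum>i\<le>degree p. coeff p i * x ^ i)" by (rule poly_altdef)
  also have "\<dots> = (\<Sum>i<n. coeff p i * x ^ i)"
    by (rule sum.mono_neutral_left) (use assms in \<open>auto simp: coeff_eq_0\<close>)
  finally show ?thesis .
qed

lemma ortho:
  fixes \<alpha> :: "'a::field"
  assumes "prim_root n \<alpha>" "n > 0" "i < n" "l < n"
  shows "(\<Sum>u<n. (\<alpha>^i * inverse (\<alpha>^l))^u) = (if i = l then of_nat n else 0)"
proof -
  note pf = prim_root_facts[OF assms(1,2)]
  let ?g = "\<alpha>^i * inverse (\<alpha>^l)"
  have g1: "?g = 1 \<longleftrightarrow> i = l"
  proof
    assume "?g = 1"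
    then have "\<alpha>^i = \<alpha>^l" using pf(1) by (simp add: field_simps)
    then show "i = l" using pf(4) assms(3,4) by (auto simp: inj_on_def)
  qed (use pf(1) in simp)
  have gn: "?g ^ n = 1"
    by (simp add: power_mult_distrib power_inverse power_mult[symmetric] mult.commute[of _ n] power_mult pf(2))
  show ?thesis
  proof (cases "i = l")
    case True then show ?thesis using pf(1) by simp
  next
    case False
    then have "?g \<noteq> 1" using g1 by blast
    then show ?thesis using False gn by (simp add: sum_gp_strict)
  qed
qed

lemma parseval:
  fixes \<alpha> :: "'a::field" and C D :: "'a poly"
  assumes "prim_root n \<alpha>" "n > 0" "of_nat n = (1::'a)" "degree C < n" "degree D < n"
  shows "(\<Sum>i<n. coeff C i * coeff D i) = (\<Sum>u<n. poly C (\<alpha>^u) * poly D (inverse (\<alpha>^u)))"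
proof -
  have "(\<Sum>u<n. poly C (\<alpha>^u) * poly D (inverse (\<alpha>^u)))
      = (\<Sum>u<n. \<Sum>i<n. \<Sum>l<n. coeff C i * coeff D l * (\<alpha>^i * inverse (\<alpha>^l))^u)"
  proof (rule sum.cong[OF refl])
    fix u
    have "poly C (\<alpha>^u) * poly D (inverse (\<alpha>^u)) = (\<Sum>i<n. coeff C i * (\<alpha>^u)^i) * (\<Sum>l<n. coeff D l * (inverse (\<alpha>^u))^l)"
      using poly_sum_n[OF assms(4)] poly_sum_n[OF assms(5)] by simp
    also have "\<dots> = (\<Sum>i<n. \<Sum>l<n. coeff C i * (\<alpha>^u)^i * (coeff D l * (inverse (\<alpha>^u))^l))"
      by (simp add: sum_product)
    also have "\<dots> = (\<Sum>i<n. \<Sum>l<n. coeff C i * coeff D l * (\<alpha>^i * inverse (\<alpha>^l))^u)"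
      by (intro sum.cong refl) (simp add: power_mult_distrib power_inverse power_mult[symmetric] mult.commute mult.left_commute)
    finally show "poly C (\<alpha>^u) * poly D (inverse (\<alpha>^u)) = (\<Sum>i<n. \<Sum>l<n. coeff C i * coeff D l * (\<alpha>^i * inverse (\<alpha>^l))^u)" .
  qed
  also have "\<dots> = (\<Sum>i<n. \<Sum>u<n. \<Sum>l<n. coeff C i * coeff D l * (\<alpha>^i * inverse (\<alpha>^l))^u)"
    by (rule sum.swap)
  also have "\<dots> = (\<Sum>i<n. \<Sum>l<n. \<Sum>u<n. coeff C i * coeff D l * (\<alpha>^i * inverse (\<alpha>^l))^u)"
    by (intro sum.cong refl sum.swap)
  also have "\<dots> = (\<Sum>i<n. \<Sum>l<n. coeff C i * coeff D l * (if i = l then 1 else 0))"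
    by (intro sum.cong refl) (simp add: sum_distrib_left[symmetric] ortho[OF assms(1,2)] assms(3))
  also have "\<dots> = (\<Sum>i<n. coeff C i * coeff D i)"
    by (simp add: if_distrib cong: if_cong)
  finally show ?thesis by simp
qed

lemma inversion:
  fixes \<alpha> :: "'a::field"
  assumes "prim_root n \<alpha>" "n > 0" "of_nat n = (1::'a)"
    and h: "\<And>j. j < n \<Longrightarrow> (\<Sum>u<n. F u * (inverse (\<alpha>^u))^j) = 0" and v: "v < n"
  shows "F v = 0"
proof -
  have "0 = (\<Sum>j<n. (\<alpha>^v)^j * (\<Sum>u<n. F u * (inverse (\<alpha>^u))^j))" using h by simp
  also have "\<dots> = (\<Sum>j<n. \<Sum>u<n. F u * (\<alpha>^v * inverse (\<alpha>^u))^j)"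
    by (intro sum.cong refl) (simp add: sum_distrib_left power_mult_distrib mult.commute mult.left_commute)
  also have "\<dots> = (\<Sum>u<n. \<Sum>j<n. F u * (\<alpha>^v * inverse (\<alpha>^u))^j)" by (rule sum.swap)
  also have "\<dots> = (\<Sum>u<n. F u * (if v = u then 1 else 0))"
    by (intro sum.cong refl) (simp add: sum_distrib_left[symmetric] ortho[OF assms(1,2) v] assms(3))
  also have "\<dots> = F v" using v by (simp add: if_distrib cong: if_cong)
  finally show ?thesis by simp
qed


lemma degree_map_bit: "degree (map_poly of_bit p :: 'a::field poly) = degree p"
  by (rule degree_map_poly) simp

lemma cyclic_PP_iff:
  assumes "prim_root n \<alpha>" "n > 0" "S \<subseteq> {..<n}"
  shows "c \<in> cyclic_code n (PP \<alpha> S) \<longleftrightarrow> degree c < n \<and> (\<forall>i\<in>S. poly (map_poly of_bit c) (\<alpha> ^ i) = 0)"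
  unfolding cyclic_code_def using PP_dvd_iff[OF assms] by simp

lemma map_bit_1: "(map_poly of_bit (1::bit poly) :: 'a::field poly) = 1"
  by (rule poly_eqI) (simp add: coeff_map_poly coeff_1)

theorem lemma3:
  fixes m r :: nat and \<alpha> :: "'a::{field,finite}"
  assumes "card (UNIV :: 'a set) = 2 ^ m"
    and "prim_root (2 ^ m - 1) \<alpha>"
    and "m \<ge> 7"
    and "\<lceil>real m / 2\<rceil> < int r" and "int r < int m - 2"
  shows "dual_code (2^m - 1) (punct_RM r m \<alpha>) \<subseteq> punct_RM r m \<alpha>
       \<and> punct_RM r m \<alpha> \<subset> bch_code (2^m - 1) (2^(m - r) - 1) \<alpha>"
proof -
  define n where "n = (2::nat)^m - 1"
  define k where "k = m - r"
  have two: "(2::'a) = 0" using char2_of_card[OF assms(1)] assms(3) by simp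
  have "real m / 2 \<le> real_of_int \<lceil>real m / 2\<rceil>" by (rule le_of_int_ceiling)
  then have "real m / 2 < real r" using assms(4) by linarith
  then have mr: "m < 2 * r" by linarith
  have rm: "r + 2 < m" using assms(5) by linarith
  have k3: "k \<ge> 3" using rm k_def by linarith
  have k2: "2 * k < m" using mr rm k_def by linarith
  have m2: "m \<ge> 2" using assms(3) by linarith
  have "(2::nat)^2 \<le> 2^m" using m2 by (intro power_increasing) auto
  then have pm: "(2::nat)^m \<ge> 4" by simp
  have n0: "n > 0" using pm n_def by linarith
  have nodd: "odd n"
  proof -
    have "(2::nat)^m = 2 * 2^(m-1)" using m2 by (cases m) simp_all
    moreover have "(1::nat) \<le> 2^(m-1)" by simp
    ultimately have "n = 2 * (2^(m-1) - 1) + 1" using n_def by linarith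
    then show ?thesis by simp
  qed
  have pr: "prim_root n \<alpha>" using assms(2) n_def by simp
  note pf = prim_root_facts[OF pr n0]
  have ofn: "of_nat n = (1::'a)"
  proof -
    have "n + 1 = 2^m" using pm n_def by simp
    then have "of_nat (n + 1) = (of_nat (2^m) :: 'a)" by (rule arg_cong)
    then have "of_nat n + (1::'a) = of_nat (2^m)" by (simp add: add.commute)
    also have "\<dots> = 0" using two assms(3) by simp
    finally have "of_nat n = (-1::'a)" by (simp add: eq_neg_iff_add_eq_0)
    also have "(-1::'a) = 1"
    proof -
      have "(1::'a) + 1 = 0" using two by (simp only: one_add_one)
      then show ?thesis by (simp add: eq_neg_iff_add_eq_0)
    qed
    finally show ?thesis .
  qed
  define W where "W = {t. t < n \<and> 1 \<le> w2 t \<and> w2 t \<le> m - r - 1}"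
  define ZB where "ZB = (\<Union>j \<in> {0..(2^k - 1) - 2}. cyc_coset n (1 + j))"
  have RM: "punct_RM r m \<alpha> = cyclic_code n (PP \<alpha> W)"
    unfolding punct_RM_def RM_gen_eq[OF m2] W_def n_def ..
  have BCH: "bch_code (2^m - 1) (2^(m - r) - 1) \<alpha> = cyclic_code n (PP \<alpha> ZB)"
    unfolding bch_code_def PP_def ZB_def n_def k_def ..
  have Wsub: "W \<subseteq> {..<n}" by (auto simp: W_def)
  have ZBW: "ZB \<subseteq> W"
    using ZB_sub[OF m2, of k] k3 k_def n_def unfolding ZB_def W_def by auto
  have ZBsub: "ZB \<subseteq> {..<n}" using ZBW Wsub by blast
  have W0: "0 \<notin> W" by (simp add: W_def)
  have Wcl: "\<And>i. i \<in> W \<Longrightarrow> (2 * i) mod n \<in> W"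
  proof -
    fix i assume "i \<in> W"
    then show "(2 * i) mod n \<in> W" using w2_rot[of m i] m2 n0 unfolding W_def n_def by auto
  qed
  have ZBcl: "\<And>i. i \<in> ZB \<Longrightarrow> (2 * i) mod n \<in> ZB"
    unfolding ZB_def using coset_closed by blast
  obtain gR :: "bit poly" where gR: "map_poly of_bit gR = (PP \<alpha> W :: 'a poly)"
    using PP_binary[OF pr n0 nodd Wsub Wcl two] by blast
  obtain gB :: "bit poly" where gB: "map_poly of_bit gB = (PP \<alpha> ZB :: 'a poly)"
    using PP_binary[OF pr n0 nodd ZBsub ZBcl two] by blast
  note memR = cyclic_PP_iff[OF pr n0 Wsub]
  note memB = cyclic_PP_iff[OF pr n0 ZBsub]
  have sub: "cyclic_code n (PP \<alpha> W) \<subseteq> cyclic_code n (PP \<alpha> ZB)"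
    using memR memB ZBW by blast
  define t0 :: nat where "t0 = 1 + 2^k"
  have t0: "t0 < n" "t0 \<in> W" "t0 \<notin> ZB"
  proof -
    show "t0 < n" using witness_in(1)[OF k3 k2] t0_def n_def by simp
    moreover have "w2 t0 = 2" using witness_in(2)[OF k3 k2] t0_def by simp
    ultimately show "t0 \<in> W" using k3 k_def W_def by auto
    show "t0 \<notin> ZB" using witness_notin[OF k3 k2] t0_def ZB_def n_def by simp
  qed
  have gBin: "gB \<in> cyclic_code n (PP \<alpha> ZB)"
  proof -
    have "ZB \<subseteq> {1..<n}"
    proof
      fix x assume "x \<in> ZB"
      then have "x < n" "x \<in> W" using ZBsub ZBW by auto
      then show "x \<in> {1..<n}" using W0 by (cases x) auto
    qed
    then have "card ZB \<le> card {1..<n}" by (intro card_mono) auto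
    then have "card ZB < n" using n0 by simp
    moreover have "degree gB = card ZB"
      using degree_map_bit[of gB, where 'a='a] gB degree_PP[of ZB \<alpha>] ZBsub finite_subset by auto
    ultimately show ?thesis unfolding cyclic_code_def using gB by simp
  qed
  have gBout: "gB \<notin> cyclic_code n (PP \<alpha> W)"
  proof
    assume "gB \<in> cyclic_code n (PP \<alpha> W)"
    then have "poly (map_poly of_bit gB) (\<alpha> ^ t0) = (0::'a)" using memR t0(2) by blast
    then show False using poly_PP_nonzero[OF pr n0 ZBsub t0(1,3)] gB by simp
  qed
  have dual: "dual_code n (cyclic_code n (PP \<alpha> W)) \<subseteq> cyclic_code n (PP \<alpha> W)"
  proof
    fix c assume c: "c \<in> dual_code n (cyclic_code n (PP \<alpha> W))"
    have dc: "degree c < n" using c by (simp add: dual_code_def)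
    define Xn :: "bit poly" where "Xn = monom 1 n - 1"
    have Xn0: "Xn \<noteq> 0"
    proof
      assume "Xn = 0"
      then have "coeff Xn n = 0" by simp
      then show False using n0 by (simp add: Xn_def coeff_monom)
    qed
    have dXn: "degree Xn \<le> n" unfolding Xn_def by (rule order.trans[OF degree_diff_le_max]) (simp add: degree_monom_le)
    have mapXn: "map_poly of_bit Xn = (monom 1 n - 1 :: 'a poly)"
      unfolding Xn_def map_bit_minus[OF two] map_bit_monom map_bit_1 ..
    define d where "d j = (monom 1 j * gR) mod Xn" for j
    have evald: "poly (map_poly of_bit (d j)) \<beta> = \<beta> ^ j * poly (PP \<alpha> W) \<beta>" if "\<beta> ^ n = 1" for j and \<beta> :: 'a
    proof -
      have "d j = monom 1 j * gR - (monom 1 j * gR) div Xn * Xn"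
        unfolding d_def by (rule minus_div_mult_eq_mod[symmetric])
      then have "map_poly of_bit (d j) = (map_poly of_bit (monom 1 j * gR - (monom 1 j * gR) div Xn * Xn) :: 'a poly)"
        by (rule arg_cong)
      also have "\<dots> = monom 1 j * PP \<alpha> W - map_poly of_bit ((monom 1 j * gR) div Xn) * (monom 1 n - 1 :: 'a poly)"
        by (simp only: map_bit_minus[OF two] map_bit_mult[OF two] map_bit_monom gR mapXn)
      finally have "map_poly of_bit (d j) = monom 1 j * PP \<alpha> W - map_poly of_bit ((monom 1 j * gR) div Xn) * (monom 1 n - 1 :: 'a poly)" .
      then show ?thesis using that by (simp add: poly_monom)
    qed
    have din: "d j \<in> cyclic_code n (PP \<alpha> W)" for j
    proof -
      have "degree (d j) < n"
        using degree_mod_less[OF Xn0, of "monom 1 j * gR"] dXn n0 unfolding d_def by auto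
      moreover have "\<forall>i\<in>W. poly (map_poly of_bit (d j)) (\<alpha> ^ i) = 0"
      proof
        fix i assume i: "i \<in> W"
        have "(\<alpha> ^ i) ^ n = 1" by (simp add: power_mult[symmetric] mult.commute[of i] power_mult pf(2))
        moreover have "poly (PP \<alpha> W) (\<alpha> ^ i) = 0"
          using i finite_subset[OF Wsub] by (auto simp: poly_PP prod_zero_iff)
        ultimately show "poly (map_poly of_bit (d j)) (\<alpha> ^ i) = 0"
          using evald by simp
      qed
      ultimately show ?thesis using memR by blast
    qed
    define C :: "'a poly" where "C = map_poly of_bit c"
    define G :: "'a poly" where "G = PP \<alpha> W"
    have dC: "degree C < n" unfolding C_def degree_map_bit using dc .
    have key: "(\<Sum>u<n. (poly C (\<alpha>^u) * poly G (inverse (\<alpha>^u))) * (inverse (\<alpha>^u))^j) = 0" if "j < n" for j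
    proof -
      have "(\<Sum>i<n. coeff c i * coeff (d j) i) = 0" using c din by (simp add: dual_code_def)
      then have "(0::'a) = of_bit (\<Sum>i<n. coeff c i * coeff (d j) i)" by simp
      also have "\<dots> = (\<Sum>i<n. of_bit (coeff c i) * of_bit (coeff (d j) i))"
        by (simp only: of_bit_sum[OF two] of_bit_mult)
      also have "\<dots> = (\<Sum>i<n. coeff C i * coeff (map_poly of_bit (d j)) i)"
        by (simp only: coeff_map_bit C_def)
      also have "\<dots> = (\<Sum>u<n. poly C (\<alpha>^u) * poly (map_poly of_bit (d j)) (inverse (\<alpha>^u)))"
        by (rule parseval[OF pr n0 ofn dC]) (use din[of j] degree_map_bit[where 'a='a] in \<open>simp add: cyclic_code_def\<close>)
      also have "\<dots> = (\<Sum>u<n. (poly C (\<alpha>^u) * poly G (inverse (\<alpha>^u))) * (inverse (\<alpha>^u))^j)"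
      proof (intro sum.cong refl)
        fix u
        have "(inverse (\<alpha>^u)) ^ n = 1"
          by (simp add: power_inverse power_mult[symmetric] mult.commute[of u] power_mult pf(2))
        then show "poly C (\<alpha>^u) * poly (map_poly of_bit (d j)) (inverse (\<alpha>^u)) = (poly C (\<alpha>^u) * poly G (inverse (\<alpha>^u))) * (inverse (\<alpha>^u))^j"
          using evald G_def by (simp add: mult.commute mult.left_commute)
      qed
      finally show ?thesis by simp
    qed
    have "\<forall>v\<in>W. poly C (\<alpha> ^ v) = 0"
    proof
      fix v assume v: "v \<in> W"
      have vn: "v < n" using v W_def by simp
      have FV: "poly C (\<alpha>^v) * poly G (inverse (\<alpha>^v)) = 0"
        by (rule inversion[OF pr n0 ofn, where F = "\<lambda>u. poly C (\<alpha>^u) * poly G (inverse (\<alpha>^u))"])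
           (use key vn in auto)
      have v0: "v \<noteq> 0" using v W0 by (cases v) auto
      have inv: "inverse (\<alpha>^v) = \<alpha>^(n - v)"
      proof -
        have "\<alpha>^v * \<alpha>^(n - v) = 1" using vn pf(2) by (simp flip: power_add)
        then show ?thesis by (rule inverse_unique)
      qed
      have nv: "n - v < n" "n - v \<notin> W"
      proof -
        show "n - v < n" using v0 vn by simp
        have "v < 2^m" using vn n_def by simp
        then have "w2 (n - v) = m - w2 v" using w2_compl[of v m] n_def by simp
        moreover have "w2 v \<le> m - r - 1" using v W_def by simp
        ultimately show "n - v \<notin> W" using W_def mr rm by auto
      qed
      have "poly G (inverse (\<alpha>^v)) \<noteq> 0"
        using poly_PP_nonzero[OF pr n0 Wsub nv] inv G_def by simp
      then show "poly C (\<alpha> ^ v) = 0" using FV by simp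
    qed
    then show "c \<in> cyclic_code n (PP \<alpha> W)" using memR dc C_def by blast
  qed
  have BCH': "bch_code n (2^(m - r) - 1) \<alpha> = cyclic_code n (PP \<alpha> ZB)"
    using BCH n_def by simp
  show ?thesis
    unfolding n_def[symmetric] RM BCH' using dual sub gBin gBout by blast
qed

end
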